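(* Consider the standard sequential oligopoly with linear inverse demand $P(X)=a(\overline{X}-X)$, $a>0$, constant marginal cost $c\ge 0$ with $\overline{X}_c:=\overline{X}-\frac{c}{a}>0$, and a random arrival process of firms that never has arrivals after some finite period $T$. Let each firm hold arbitrary beliefs about the future arrival process (possibly different across firms, possibly depending on the observed cumulative quantity, the individual quantities of leaders, and any public or private signals). Then in every equilibrium, for every realization $\boldsymbol{n}=(n_1,\dots,n_T)$ of the arrival process, the total equilibrium quantity and individual quantities are $$X^*=\left[1-\frac{1}{\prod_{s=1}^T(1+n_s)}\right]\overline{X}_c,\qquad x_i^*=\frac{\overline{X}_c}{\prod_{s=1}^t(1+n_s)}\quad\text{for all } t\in\{1,\dots,T\},\ i\in\mathcal{I}_t .$$ In particular, the equilibrium quantity of each firm does not depend on the realized numbers of its followers $(n_{t+1},\dots,n_T)$ nor on the firm's beliefs about them.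
   Context: Firms produce a homogeneous good, each with constant marginal cost $c\ge0$; firm $i$ chooses $x_i\ge 0$, total quantity is $X=\sum_i x_i$, and firm $i$'s profit is $x_i(P(X)-c)$. Firms are partitioned into periods: $\mathcal{I}_t$ is the set of firms arriving in period $t$, $n_t=\#\mathcal{I}_t$. A firm $i\in\mathcal{I}_t$ observes the cumulative quantity $X_{t-1}=\sum_{s<t}\sum_{j\in\mathcal{I}_s}x_j$ of all earlier firms and the number $n_t$, and chooses $x_i$ simultaneously with the other firms in period $t$. In the stochastic version, the sequence $\boldsymbol{n}=(n_1,\dots,n_T)$ is a random variable with arbitrary distribution, and each firm maximizes its expected profit given its beliefs about the future arrivals $(n_{t+1},\dots,n_T)$; equilibrium means subgame perfect (sequentially rational) behavior with interior solutions. *)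

theory Defs
  imports "HOL-Probability.Probability_Mass_Function"
begin

text \<open>A history is a list of per-period quantity vectors: entry s-1 lists the
  individual quantities of the firms of period s.  A strategy profile
  sigma h m j gives the quantity of firm j (j < m) of the period following
  history h, when that period has m arrivals.  Beliefs beta h m j are a
  probability distribution over arrival sequences (nat => nat, period s
  has nn s arrivals); only the entries for periods after the firm's own
  period (and up to T) are used.\<close>

type_synonym history = "real list list"
type_synonym strategy = "history \<Rightarrow> nat \<Rightarrow> nat \<Rightarrow> real"
type_synonym beliefs = "history \<Rightarrow> nat \<Rightarrow> nat \<Rightarrow> (nat \<Rightarrow> nat) pmf"

definition stage :: "strategy \<Rightarrow> history \<Rightarrow> nat \<Rightarrow> real list" where
  "stage \<sigma> h m = map (\<sigma> h m) [0..<m]"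

fun extend :: "strategy \<Rightarrow> (nat \<Rightarrow> nat) \<Rightarrow> history \<Rightarrow> nat \<Rightarrow> history" where
  "extend \<sigma> nn h 0 = h"
| "extend \<sigma> nn h (Suc k) = extend \<sigma> nn (h @ [stage \<sigma> h (nn (Suc (length h)))]) k"

definition total :: "history \<Rightarrow> real" where
  "total h = sum_list (map sum_list h)"

definition price :: "real \<Rightarrow> real \<Rightarrow> real \<Rightarrow> real" where
  "price a Xbar X = a * (Xbar - X)"

definition valid_history :: "history \<Rightarrow> bool" where
  "valid_history h = (\<forall>q\<in>set h. \<forall>x\<in>set q. 0 \<le> x)"

definition exp_profit ::
  "real \<Rightarrow> real \<Rightarrow> real \<Rightarrow> nat \<Rightarrow> strategy \<Rightarrow> beliefs \<Rightarrow> history \<Rightarrow> nat \<Rightarrow> nat \<Rightarrow> real \<Rightarrow> real" where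
  "exp_profit a Xbar c T \<sigma> \<beta> h m j y =
     measure_pmf.expectation (\<beta> h m j)
       (\<lambda>\<omega>. y * (price a Xbar
            (total (extend \<sigma> \<omega> (h @ [(stage \<sigma> h m)[j := y]]) (T - Suc (length h)))) - c))"

definition is_equilibrium ::
  "real \<Rightarrow> real \<Rightarrow> real \<Rightarrow> nat \<Rightarrow> strategy \<Rightarrow> beliefs \<Rightarrow> bool" where
  "is_equilibrium a Xbar c T \<sigma> \<beta> =
     (\<forall>h m j. valid_history h \<longrightarrow> length h < T \<longrightarrow> j < m \<longrightarrow>
        0 \<le> \<sigma> h m j \<and>
        (\<forall>y\<ge>0. exp_profit a Xbar c T \<sigma> \<beta> h m j y \<le> exp_profit a Xbar c T \<sigma> \<beta> h m j (\<sigma> h m j)))"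

end

theory Submission
  imports Defs
begin

lemma exp_pos:
  fixes f :: "'a \<Rightarrow> real"
  assumes "\<And>x. 0 < f x" "\<And>x. f x \<le> 1"
  shows "0 < measure_pmf.expectation p f"
proof -
  have int: "integrable (measure_pmf p) f"
    using assms by (intro measure_pmf.integrable_const_bound[where B=1] AE_pmfI)
      (auto simp: abs_of_pos)
  have ge: "0 \<le> measure_pmf.expectation p f" using assms by (intro integral_nonneg_AE AE_pmfI) (auto intro: less_imp_le)
  have "measure_pmf.expectation p f \<noteq> 0"
  proof
    assume "measure_pmf.expectation p f = 0"
    then have "AE x in measure_pmf p. f x = 0"
      using integral_nonneg_eq_0_iff_AE[OF int] assms by (auto intro: less_imp_le)
    then have "\<forall>y\<in>set_pmf p. f y = 0" by (simp add: AE_measure_pmf_iff)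
    moreover obtain y where "y \<in> set_pmf p" using set_pmf_not_empty by fast
    ultimately show False using assms(1) by (metis less_irrefl)
  qed
  with ge show ?thesis by simp
qed

lemma sum_list_update_ab:
  fixes xs :: "'a::ab_group_add list"
  shows "k < length xs \<Longrightarrow> sum_list (xs[k := x]) = sum_list xs + x - xs ! k"
proof (induct xs arbitrary: k)
  case Nil then show ?case by simp
next
  case (Cons z zs) then show ?case by (cases k) (auto simp: algebra_simps)
qed

lemma total_snoc: "total (h @ [q]) = total h + sum_list q"
  by (simp add: total_def)

lemma stage_sum: "sum_list (stage \<sigma> h m) = (\<Sum>i<m. \<sigma> h m i)"
  by (simp add: stage_def interv_sum_list_conv_sum_set_nat atLeast0LessThan)

lemma length_stage[simp]: "length (stage \<sigma> h m) = m"
  by (simp add: stage_def)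

lemma nth_stage[simp]: "j < m \<Longrightarrow> stage \<sigma> h m ! j = \<sigma> h m j"
  by (simp add: stage_def)

lemma valid_snoc: "valid_history h \<Longrightarrow> (\<forall>x\<in>set q. 0 \<le> x) \<Longrightarrow> valid_history (h @ [q])"
  by (auto simp: valid_history_def)

lemma ext_add: "extend \<sigma> nn h (k + l) = extend \<sigma> nn (extend \<sigma> nn h k) l"
  by (induct k arbitrary: h) auto

lemma ext_prefix: "\<exists>rest. extend \<sigma> nn h k = h @ rest"
proof (induct k arbitrary: h)
  case 0 then show ?case by simp
next
  case (Suc k)
  obtain rest where "extend \<sigma> nn (h @ [stage \<sigma> h (nn (Suc (length h)))]) k
     = (h @ [stage \<sigma> h (nn (Suc (length h)))]) @ rest" using Suc by blast
  then show ?case by auto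
qed

lemma ext_snoc: "extend \<sigma> nn h (Suc k) = extend \<sigma> nn h k @
   [stage \<sigma> (extend \<sigma> nn h k) (nn (Suc (length (extend \<sigma> nn h k))))]"
  using ext_add[of \<sigma> nn h k 1] by simp

context
  fixes a Xbar c :: real and T :: nat and \<sigma> :: strategy and \<beta> :: beliefs
  assumes apos: "a > 0" and eq: "is_equilibrium a Xbar c T \<sigma> \<beta>"
begin

lemma sig_nonneg: "valid_history h \<Longrightarrow> length h < T \<Longrightarrow> j < m \<Longrightarrow> 0 \<le> \<sigma> h m j"
  using eq unfolding is_equilibrium_def by blast

lemma sig_opt: "valid_history h \<Longrightarrow> length h < T \<Longrightarrow> j < m \<Longrightarrow> 0 \<le> y \<Longrightarrow>
   exp_profit a Xbar c T \<sigma> \<beta> h m j y \<le> exp_profit a Xbar c T \<sigma> \<beta> h m j (\<sigma> h m j)"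
  using eq unfolding is_equilibrium_def by blast

lemma stage_nonneg: "valid_history h \<Longrightarrow> length h < T \<Longrightarrow> \<forall>x\<in>set (stage \<sigma> h m). 0 \<le> x"
  by (auto simp: stage_def intro: sig_nonneg)

lemma ext_valid: "valid_history h \<Longrightarrow> length h + k \<le> T \<Longrightarrow>
   valid_history (extend \<sigma> nn h k) \<and> length (extend \<sigma> nn h k) = length h + k"
proof (induct k arbitrary: h)
  case 0 then show ?case by simp
next
  case (Suc k)
  let ?h' = "h @ [stage \<sigma> h (nn (Suc (length h)))]"
  have "valid_history ?h'" using Suc.prems by (intro valid_snoc stage_nonneg) auto
  moreover have "length ?h' + k \<le> T" using Suc.prems by simp
  ultimately show ?case using Suc.hyps[of ?h'] by simp
qed

abbreviation Xc where "Xc \<equiv> Xbar - c / a"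

definition CONT :: "nat \<Rightarrow> bool" where
  "CONT k = (\<forall>h nn. valid_history h \<longrightarrow> length h + k = T \<longrightarrow>
     total (extend \<sigma> nn h k) = (if total h \<le> Xc
        then Xc - (Xc - total h) / (\<Prod>s\<in>{Suc (length h)..length h + k}. 1 + real (nn s))
        else total h))"

lemma profit:
  assumes C: "CONT k" and v: "valid_history h" and l: "length h + Suc k = T" and j: "j < m"
    and y: "0 \<le> y"
  defines "R' \<equiv> Xc - total h - ((\<Sum>i<m. \<sigma> h m i) - \<sigma> h m j)"
    and "q \<equiv> measure_pmf.expectation (\<beta> h m j)
          (\<lambda>\<omega>. 1 / (\<Prod>s\<in>{Suc (Suc (length h))..T}. 1 + real (\<omega> s)))"
  shows "exp_profit a Xbar c T \<sigma> \<beta> h m j y = (if y \<le> R' then a*y*(R'-y) * q else a*y*(R'-y))"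
proof -
  define hy where "hy = h @ [(stage \<sigma> h m)[j:=y]]"
  have vy: "valid_history hy" unfolding hy_def
    using stage_nonneg[of h m] v l y set_update_subset_insert[of "stage \<sigma> h m" j y]
    by (intro valid_snoc) auto
  have ly: "length hy + k = T" using l by (simp add: hy_def)
  have Tk: "T - Suc (length h) = k" using l by simp
  have ty: "total hy = total h + ((\<Sum>i<m. \<sigma> h m i) - \<sigma> h m j) + y"
  proof -
    have "sum_list ((stage \<sigma> h m)[j:=y]) = sum_list (stage \<sigma> h m) + y - stage \<sigma> h m ! j"
      using j by (intro sum_list_update_ab) simp
    then show ?thesis using j by (simp add: hy_def total_snoc stage_sum)
  qed
  have ivl: "{Suc (length hy)..length hy + k} = {Suc (Suc (length h))..T}"
    using l by (simp add: hy_def)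
  have pw: "y * (price a Xbar (total (extend \<sigma> \<omega> hy k)) - c)
      = (if y \<le> R' then a*y*(R'-y) * (1 / (\<Prod>s\<in>{Suc (Suc (length h))..T}. 1 + real (\<omega> s)))
         else a*y*(R'-y))" for \<omega>
  proof -
    have e: "total (extend \<sigma> \<omega> hy k) = (if total hy \<le> Xc
        then Xc - (Xc - total hy) / (\<Prod>s\<in>{Suc (Suc (length h))..T}. 1 + real (\<omega> s))
        else total hy)"
      using C vy ly ivl unfolding CONT_def by metis
    have p: "price a Xbar X - c = a * (Xc - X)" for X
      using apos by (simp add: price_def field_simps)
    have cond: "(total hy \<le> Xc) = (y \<le> R')" and df: "Xc - total hy = R' - y"
      using ty by (auto simp: R'_def)
    show ?thesis unfolding p e cond df[symmetric] by simp
  qed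
  have "exp_profit a Xbar c T \<sigma> \<beta> h m j y = measure_pmf.expectation (\<beta> h m j)
      (\<lambda>\<omega>. (if y \<le> R' then a*y*(R'-y) * (1 / (\<Prod>s\<in>{Suc (Suc (length h))..T}. 1 + real (\<omega> s)))
         else a*y*(R'-y)))"
    unfolding exp_profit_def Tk hy_def[symmetric] pw ..
  also have "\<dots> = (if y \<le> R' then a*y*(R'-y) * q else a*y*(R'-y))"
    by (cases "y \<le> R'") (simp_all add: q_def del: times_divide_eq_right)
  finally show ?thesis .
qed

lemma firm:
  assumes C: "CONT k" and v: "valid_history h" and l: "length h + Suc k = T" and j: "j < m"
  defines "R' \<equiv> Xc - total h - ((\<Sum>i<m. \<sigma> h m i) - \<sigma> h m j)"
  shows "(R' > 0 \<and> \<sigma> h m j = R' / 2) \<or> (R' \<le> 0 \<and> \<sigma> h m j = 0)"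
proof -
  define q where "q = measure_pmf.expectation (\<beta> h m j)
          (\<lambda>\<omega>. 1 / (\<Prod>s\<in>{Suc (Suc (length h))..T}. 1 + real (\<omega> s)))"
  have q: "q > 0" unfolding q_def
  proof (rule exp_pos)
    fix \<omega> :: "nat \<Rightarrow> nat"
    have "1 \<le> (\<Prod>s\<in>{Suc (Suc (length h))..T}. 1 + real (\<omega> s))"
      by (rule prod_ge_1) simp
    then show "0 < 1 / (\<Prod>s\<in>{Suc (Suc (length h))..T}. 1 + real (\<omega> s))"
      and "1 / (\<Prod>s\<in>{Suc (Suc (length h))..T}. 1 + real (\<omega> s)) \<le> 1" by auto
  qed
  define x where "x = \<sigma> h m j"
  have lT: "length h < T" using l by simp
  have x0: "0 \<le> x" unfolding x_def using sig_nonneg[OF v lT j] .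
  define E where "E y = (if y \<le> R' then a*y*(R'-y) * q else a*y*(R'-y))" for y
  have E: "exp_profit a Xbar c T \<sigma> \<beta> h m j y = E y" if "0 \<le> y" for y
    unfolding E_def R'_def q_def by (rule profit[OF C v l j that])
  have opt: "E y \<le> E x" if "0 \<le> y" for y
    using sig_opt[OF v lT j that] E[OF that] E[OF x0] by (simp add: x_def)
  show ?thesis
  proof (cases "R' > 0")
    case True
    have h2: "E (R'/2) = a * q * (R'/2)^2" using True by (simp add: E_def power2_eq_square algebra_simps)
    have pos: "0 < a * q * (R'/2)^2" using True apos q by simp
    have "E (R'/2) \<le> E x" using opt True by simp
    show ?thesis
    proof (cases "x \<le> R'")
      case True
      then have "a * q * (R'/2)^2 \<le> a * q * (x * (R' - x))"
        using \<open>E (R'/2) \<le> E x\<close> h2 by (simp add: E_def algebra_simps)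
      then have "(R'/2)^2 \<le> x * (R' - x)" using apos q by (simp add: mult_le_cancel_left_pos)
      then have "(x - R'/2)^2 \<le> 0" by (simp add: power2_eq_square algebra_simps)
      then have "x = R'/2" by simp
      then show ?thesis using \<open>R' > 0\<close> by (simp add: x_def)
    next
      case False
      then have "E x = a * x * (R' - x)" by (simp add: E_def)
      moreover have "a * x * (R' - x) < 0" using False \<open>R' > 0\<close> apos
        by (simp add: mult_pos_neg)
      ultimately show ?thesis using \<open>E (R'/2) \<le> E x\<close> h2 pos by linarith
    qed
  next
    case False
    have "x = 0"
    proof (rule ccontr)
      assume "x \<noteq> 0"
      then have xp: "x > 0" using x0 by simp
      then have "E x = a * x * (R' - x)" using False by (simp add: E_def)
      moreover have "a * x * (R' - x) < 0" using False xp apos by (simp add: mult_pos_neg)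
      moreover have "E 0 = 0" by (simp add: E_def)
      ultimately show False using opt[of 0] by simp
    qed
    then show ?thesis using False by (simp add: x_def)
  qed
qed

lemma stage_val:
  assumes C: "CONT k" and v: "valid_history h" and l: "length h + Suc k = T" and j: "j < m"
  shows "\<sigma> h m j = (if Xc - total h > 0 then (Xc - total h) / (1 + real m) else 0)"
proof -
  define R where "R = Xc - total h"
  define S where "S = (\<Sum>i<m. \<sigma> h m i)"
  have F: "(R - S > 0 \<and> \<sigma> h m i = R - S) \<or> (R - S \<le> 0 \<and> \<sigma> h m i = 0)" if "i < m" for i
    using firm[OF C v l that] unfolding R_def S_def by auto
  show ?thesis
  proof (cases "R - S > 0")
    case True
    then have all: "\<sigma> h m i = R - S" if "i < m" for i using F[OF that] by auto
    have "(\<Sum>i<m. \<sigma> h m i) = (\<Sum>i<m. R - S)" by (rule sum.cong) (auto simp: all)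
    then have "S = real m * (R - S)" unfolding S_def by simp
    then have "S * (1 + real m) = real m * R" by (simp add: algebra_simps)
    then have "R = (R - S) * (1 + real m)" by (simp add: algebra_simps)
    then have RS: "R - S = R / (1 + real m)" by (simp add: field_simps)
    have "R > 0" using True \<open>R = (R - S) * (1 + real m)\<close> by (metis add_pos_nonneg mult_pos_pos of_nat_0_le_iff zero_less_one)
    then show ?thesis using all[OF j] RS unfolding R_def by simp
  next
    case False
    then have all: "\<sigma> h m i = 0" if "i < m" for i using F[OF that] by auto
    have "(\<Sum>i<m. \<sigma> h m i) = (\<Sum>i<m. 0)" by (rule sum.cong) (auto simp: all)
    then have "S = 0" unfolding S_def by simp
    then have "\<not> R > 0" using False by simp
    then show ?thesis using all[OF j] unfolding R_def by simp
  qed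
qed

lemma cont_step:
  assumes v: "valid_history h" and lT: "length h < T"
    and sv: "\<forall>j<nn (Suc (length h)). \<sigma> h (nn (Suc (length h))) j
        = (if Xc - total h > 0 then (Xc - total h) / (1 + real (nn (Suc (length h)))) else 0)"
    and IH: "total (extend \<sigma> nn (h @ [stage \<sigma> h (nn (Suc (length h)))]) k) =
        (if total (h @ [stage \<sigma> h (nn (Suc (length h)))]) \<le> Xc
        then Xc - (Xc - total (h @ [stage \<sigma> h (nn (Suc (length h)))])) /
            (\<Prod>s\<in>{Suc (Suc (length h))..Suc (length h) + k}. 1 + real (nn s))
        else total (h @ [stage \<sigma> h (nn (Suc (length h)))]))"
  shows "total (extend \<sigma> nn h (Suc k)) = (if total h \<le> Xc
        then Xc - (Xc - total h) / (\<Prod>s\<in>{Suc (length h)..length h + Suc k}. 1 + real (nn s))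
        else total h)"
proof -
  define m where "m = nn (Suc (length h))"
  define R where "R = Xc - total h"
  define v0 where "v0 = (if R > 0 then R / (1 + real m) else 0)"
  define P' where "P' = (\<Prod>s\<in>{Suc (Suc (length h))..Suc (length h) + k}. 1 + real (nn s))"
  have P'pos: "P' > 0" unfolding P'_def by (rule prod_pos) auto
  have split: "(\<Prod>s\<in>{Suc (length h)..length h + Suc k}. 1 + real (nn s)) = (1 + real m) * P'"
    unfolding P'_def m_def by (subst prod.atLeast_Suc_atMost) auto
  have th: "total (h @ [stage \<sigma> h m]) = total h + real m * v0"
    using sv unfolding m_def[symmetric] R_def[symmetric] v0_def[symmetric]
    by (simp add: total_snoc stage_sum)
  have ext: "extend \<sigma> nn h (Suc k) = extend \<sigma> nn (h @ [stage \<sigma> h m]) k"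
    by (simp add: m_def)
  show ?thesis
  proof (cases "R > 0")
    case True
    have tv: "total (h @ [stage \<sigma> h m]) = Xc - R / (1 + real m)"
    proof -
      have "real m * (R / (1 + real m)) = R - R / (1 + real m)" by (simp add: field_simps)
      then show ?thesis using th True unfolding v0_def by (simp add: R_def)
    qed
    have "R / (1 + real m) > 0" using True by simp
    then have le: "total (h @ [stage \<sigma> h m]) \<le> Xc" using tv by simp
    have "total (extend \<sigma> nn h (Suc k)) = Xc - (R / (1 + real m)) / P'"
      unfolding ext using IH le tv
      unfolding m_def[symmetric] R_def[symmetric] P'_def[symmetric] by simp
    also have "\<dots> = Xc - R / ((1 + real m) * P')" by simp
    finally show ?thesis unfolding split using True by (simp add: R_def)
  next
    case False
    have tv: "total (h @ [stage \<sigma> h m]) = total h"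
      using th False unfolding v0_def by simp
    show ?thesis unfolding ext using IH tv False
      unfolding m_def[symmetric] R_def[symmetric] P'_def[symmetric]
      by (auto simp: R_def)
  qed
qed

lemma cont_all: "CONT k"
proof (induct k)
  case 0 then show ?case unfolding CONT_def by simp
next
  case (Suc k)
  show ?case unfolding CONT_def
  proof (intro allI impI)
    fix h nn assume v: "valid_history h" and l: "length h + Suc k = T"
    let ?h' = "h @ [stage \<sigma> h (nn (Suc (length h)))]"
    have v': "valid_history ?h'" using v l by (intro valid_snoc stage_nonneg) auto
    have l': "length ?h' + k = T" using l by simp
    have IH: "total (extend \<sigma> nn ?h' k) = (if total ?h' \<le> Xc
        then Xc - (Xc - total ?h') / (\<Prod>s\<in>{Suc (length ?h')..length ?h' + k}. 1 + real (nn s))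
        else total ?h')" using Suc v' l' unfolding CONT_def by blast
    show "total (extend \<sigma> nn h (Suc k)) = (if total h \<le> Xc
        then Xc - (Xc - total h) / (\<Prod>s\<in>{Suc (length h)..length h + Suc k}. 1 + real (nn s))
        else total h)"
      by (rule cont_step[OF v]) (use l stage_val[OF Suc v l] IH in auto)
  qed
qed

lemma stage_gen: "valid_history h \<Longrightarrow> length h < T \<Longrightarrow> j < m \<Longrightarrow>
   \<sigma> h m j = (if Xc - total h > 0 then (Xc - total h) / (1 + real m) else 0)"
  by (rule stage_val[OF cont_all[of "T - Suc (length h)"]]) auto

lemma gen: "valid_history h \<Longrightarrow> length h + k \<le> T \<Longrightarrow>
     total (extend \<sigma> nn h k) = (if total h \<le> Xc
        then Xc - (Xc - total h) / (\<Prod>s\<in>{Suc (length h)..length h + k}. 1 + real (nn s))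
        else total h)"
proof (induct k arbitrary: h)
  case 0 then show ?case by simp
next
  case (Suc k)
  let ?h' = "h @ [stage \<sigma> h (nn (Suc (length h)))]"
  have v': "valid_history ?h'" using Suc.prems by (intro valid_snoc stage_nonneg) auto
  have l': "length ?h' + k \<le> T" using Suc.prems by simp
  show ?case
    by (rule cont_step[OF Suc.prems(1)]) (use Suc.prems stage_gen Suc.hyps[OF v' l'] in auto)
qed

end

theorem proposition1:
  fixes a Xbar c :: real and T :: nat and \<sigma> :: strategy and \<beta> :: beliefs
    and nn :: "nat \<Rightarrow> nat"
  assumes "a > 0" and "c \<ge> 0" and "Xbar - c / a > 0"
    and "is_equilibrium a Xbar c T \<sigma> \<beta>"
  shows "total (extend \<sigma> nn [] T)
           = (1 - 1 / (\<Prod>s=1..T. 1 + real (nn s))) * (Xbar - c / a)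
         \<and> (\<forall>t\<in>{1..T}. \<forall>j<nn t.
           extend \<sigma> nn [] T ! (t - 1) ! j = (Xbar - c / a) / (\<Prod>s=1..t. 1 + real (nn s)))"
proof
  have v0: "valid_history []" by (simp add: valid_history_def)
  have t0: "total [] = 0" by (simp add: total_def)
  have P: "(\<Prod>s=1..T. 1 + real (nn s)) > 0" by (rule prod_pos) auto
  show "total (extend \<sigma> nn [] T)
           = (1 - 1 / (\<Prod>s=1..T. 1 + real (nn s))) * (Xbar - c / a)"
    using gen[OF assms(1,4) v0, of T nn] t0 assms(3) P by (simp add: field_simps)
  show "\<forall>t\<in>{1..T}. \<forall>j<nn t.
           extend \<sigma> nn [] T ! (t - 1) ! j = (Xbar - c / a) / (\<Prod>s=1..t. 1 + real (nn s))"
  proof (intro ballI allI impI)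
    fix t j assume t: "t \<in> {1..T}" and j: "j < nn t"
    define H where "H = extend \<sigma> nn [] (t - 1)"
    have vH: "valid_history H" and lH: "length H = t - 1"
      using ext_valid[OF assms(1,4) v0, of "t - 1" nn] t by (auto simp: H_def)
    have tt: "t = Suc (t - 1)" using t by simp
    have et: "extend \<sigma> nn [] t = H @ [stage \<sigma> H (nn t)]"
      using ext_snoc[of \<sigma> nn "[]" "t - 1"] lH tt unfolding H_def by (metis)
    obtain rest where "extend \<sigma> nn [] T = extend \<sigma> nn [] t @ rest"
      using ext_add[of \<sigma> nn "[]" t "T - t"] ext_prefix[of \<sigma> nn "extend \<sigma> nn [] t" "T - t"] t
      by auto
    then have e1: "extend \<sigma> nn [] T ! (t - 1) ! j = \<sigma> H (nn t) j"
      using et lH j by (simp add: nth_append)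
    have lT: "length H < T" using lH t by auto
    have e2: "\<sigma> H (nn t) j = (if Xbar - c/a - total H > 0 then (Xbar - c/a - total H) / (1 + real (nn t)) else 0)"
      using stage_gen[OF assms(1,4) vH lT j] by simp
    define Q where "Q = (\<Prod>s=1..t-1. 1 + real (nn s))"
    have Q: "Q > 0" unfolding Q_def by (rule prod_pos) auto
    have e3: "total H = (Xbar - c/a) - (Xbar - c/a) / Q"
      using gen[OF assms(1,4) v0, of "t - 1" nn] t0 assms(3) t unfolding H_def Q_def by auto
    have e4: "(\<Prod>s=1..t. 1 + real (nn s)) = Q * (1 + real (nn t))"
      proof -
      obtain t' where t': "t = Suc t'" using tt by blast
      show ?thesis unfolding Q_def t' by (simp add: prod.cl_ivl_Suc)
    qed
    have d: "Xbar - c/a - total H = (Xbar - c/a) / Q" using e3 by simp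
    have "(Xbar - c/a) / Q > 0" using assms(3) Q by simp
    then show "extend \<sigma> nn [] T ! (t - 1) ! j = (Xbar - c / a) / (\<Prod>s=1..t. 1 + real (nn s))"
      unfolding e1 e2 e4 d by simp
  qed
qed

end
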